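(* Let $F$ be a bijection of $\mathbb F_2^m$ with $F(0)=0$. Then $F$ is APN if and only if $v_F(a)=2^{m-1}$ for all $a\in\mathbb F_2^m\setminus\{0\}$.
   Context: $F:\mathbb F_2^m\to\mathbb F_2^m$ with $F(0)=0$ is APN (almost perfect nonlinear) if for all $a,b\in\mathbb F_2^m$ with $b\ne 0$ the equation $F(x)+F(x+b)=a$ has at most two solutions $x\in\mathbb F_2^m$. For nonzero $a$, $v_F(a)=|\{x+F^{-1}(a+F(x)) : x\in\mathbb F_2^m\}|$. *)

theory Defs
  imports "HOL-Analysis.Analysis" "HOL-Library.Z2"
begin

text \<open>F_2^m is modelled as bit ^ 'n (vectors over the two-element field, indexed by a
finite type 'n with m = CARD('n)); addition is componentwise addition mod 2.\<close>

definition APN :: "(bit ^ 'n \<Rightarrow> bit ^ 'n) \<Rightarrow> bool" where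
  "APN F \<longleftrightarrow> (\<forall>a b. b \<noteq> 0 \<longrightarrow> card {x. F x + F (x + b) = a} \<le> 2)"

definition vF :: "(bit ^ 'n \<Rightarrow> bit ^ 'n) \<Rightarrow> bit ^ 'n \<Rightarrow> nat" where
  "vF F a = card ((\<lambda>x. x + inv F (a + F x)) ` UNIV)"

end

theory Submission
  imports Defs
begin

lemma bit_add_self: "(z::bit^'n) + z = 0"
  by (simp add: vec_eq_iff)

lemma addc: "(x::bit^'n) + y = z \<longleftrightarrow> y = x + z"
  by (auto simp: add.assoc[symmetric] bit_add_self)

lemma neq_add: "(b::bit^'n) \<noteq> 0 \<Longrightarrow> x \<noteq> x + b"
  using addc[of x b x] by (auto simp: bit_add_self)

instance bit :: finite
proof
  have "(UNIV::bit set) = {0,1}" by auto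
  then show "finite (UNIV::bit set)" by (metis finite.emptyI finite_insert)
qed

lemma card_bit: "CARD(bit) = 2"
proof -
  have U: "(UNIV::bit set) = {0,1}" by auto
  have "card {0::bit,1} = 2" by simp
  then show ?thesis by (simp only: U)
qed

lemma card_bitvec: "CARD(bit^'n) = 2 ^ CARD('n)"
  using card_bit by simp

lemma g_iff:
  fixes F :: "bit ^ 'n \<Rightarrow> bit ^ 'n"
  assumes "bij F"
  shows "(x + inv F (a + F x) = b) \<longleftrightarrow> F x + F (x + b) = a"
proof -
  have "(x + inv F (a + F x) = b) \<longleftrightarrow> inv F (a + F x) = x + b"
    by (rule addc)
  also have "\<dots> \<longleftrightarrow> a + F x = F (x + b)"
    using assms by (metis bij_inv_eq_iff)
  also have "\<dots> \<longleftrightarrow> F (x + b) = F x + a"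
    by (auto simp: add.commute)
  also have "\<dots> \<longleftrightarrow> F x + F (x + b) = a"
    by (rule addc[symmetric])
  finally show ?thesis .
qed

lemma key:
  fixes F :: "bit ^ 'n \<Rightarrow> bit ^ 'n" and a :: "bit ^ 'n"
  assumes "bij F" and a0: "a \<noteq> 0"
  defines "g \<equiv> \<lambda>x. x + inv F (a + F x)"
  shows "vF F a = 2 ^ (CARD('n) - 1) \<longleftrightarrow>
         (\<forall>b\<in>range g. card {x. F x + F (x + b) = a} = 2)"
proof -
  define c where "c b = card {x. F x + F (x + b) = a}" for b
  have fib: "g -` {b} = {x. F x + F (x + b) = a}" for b
    using g_iff[OF assms(1)] by (auto simp: g_def)
  have U: "(UNIV :: (bit^'n) set) = (\<Union>b\<in>range g. g -` {b})" by auto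
  have "card (\<Union>b\<in>range g. g -` {b}) = (\<Sum>b\<in>range g. card (g -` {b}))"
    by (rule card_UN_disjoint) auto
  then have "card (UNIV :: (bit^'n) set) = (\<Sum>b\<in>range g. card (g -` {b}))"
    by (simp only: U[symmetric])
  moreover have "(\<Sum>b\<in>range g. card (g -` {b})) = (\<Sum>b\<in>range g. c b)"
    by (simp only: fib c_def)
  ultimately have sum: "2 ^ CARD('n) = (\<Sum>b\<in>range g. c b)"
    using card_bitvec[where 'n='n] by simp
  have ge2: "c b \<ge> 2" if bg: "b \<in> range g" for b
  proof -
    obtain x where x: "g x = b" using bg by blast
    have "x \<in> g -` {b}" using x by blast
    then have "x \<in> {x. F x + F (x + b) = a}" by (simp only: fib)
    then have xin: "F x + F (x + b) = a" by simp
    have b0: "b \<noteq> 0"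
    proof
      assume "b = 0"
      then have "a = 0" using xin by (simp add: bit_add_self)
      then show False using a0 by simp
    qed
    have "x + b + b = x" by (simp add: add.assoc bit_add_self)
    then have "F (x + b) + F (x + b + b) = a" using xin by (simp only: add.commute)
    then have "{x, x + b} \<subseteq> {x. F x + F (x + b) = a}" using xin by auto
    moreover have "x \<noteq> x + b" using b0 by (rule neq_add)
    ultimately have "card {x, x + b} \<le> c b" unfolding c_def
      by (intro card_mono) auto
    then show ?thesis using \<open>x \<noteq> x + b\<close> by simp
  qed
  have vF: "vF F a = card (range g)" by (simp add: vF_def g_def)
  have "(\<Sum>b\<in>range g. c b) = (\<Sum>b\<in>range g. 2 + (c b - 2))"
  proof (rule sum.cong)
    fix b assume "b \<in> range g"
    then have "c b \<ge> 2" by (rule ge2)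
    then show "c b = 2 + (c b - 2)" by arith
  qed simp
  also have "\<dots> = 2 * card (range g) + (\<Sum>b\<in>range g. c b - 2)"
    by (simp only: sum.distrib sum_constant) simp
  finally have eq: "2 ^ CARD('n) = 2 * card (range g) + (\<Sum>b\<in>range g. c b - 2)"
    using sum by simp
  have pw: "2 ^ CARD('n) = 2 * (2::nat) ^ (CARD('n) - 1)"
  proof -
    have "CARD('n) > 0" by simp
    then obtain k where "CARD('n) = Suc k" using gr0_conv_Suc by blast
    then show ?thesis by simp
  qed
  have "vF F a = 2 ^ (CARD('n) - 1) \<longleftrightarrow> (\<Sum>b\<in>range g. c b - 2) = 0"
    using eq vF pw by linarith
  also have "\<dots> \<longleftrightarrow> (\<forall>b\<in>range g. c b - 2 = 0)"
    by (rule sum_eq_0_iff) simp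
  also have "\<dots> \<longleftrightarrow> (\<forall>b\<in>range g. c b = 2)"
  proof (intro ball_cong refl)
    fix b assume "b \<in> range g"
    then have "c b \<ge> 2" by (rule ge2)
    then show "(c b - 2 = 0) = (c b = 2)" by arith
  qed
  finally show ?thesis by (simp add: c_def)
qed

theorem mainTheorem10:
  fixes F :: "bit ^ 'n \<Rightarrow> bit ^ 'n"
  assumes "bij F" and "F 0 = 0"
  shows "APN F \<longleftrightarrow> (\<forall>a. a \<noteq> 0 \<longrightarrow> vF F a = 2 ^ (CARD('n) - 1))"
proof
  assume apn: "APN F"
  show "\<forall>a. a \<noteq> 0 \<longrightarrow> vF F a = 2 ^ (CARD('n) - 1)"
  proof (intro allI impI)
    fix a :: "bit^'n" assume a0: "a \<noteq> 0"
    define g where "g = (\<lambda>x. x + inv F (a + F x))"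
    show "vF F a = 2 ^ (CARD('n) - 1)"
      unfolding key[OF assms(1) a0]
    proof
      fix b assume "b \<in> range (\<lambda>x. x + inv F (a + F x))"
      then obtain x where x: "x + inv F (a + F x) = b" by auto
      have xin: "F x + F (x + b) = a" using x g_iff[OF assms(1)] by auto
      have b0: "b \<noteq> 0"
      proof
        assume "b = 0"
        then have "a = 0" using xin by (simp add: bit_add_self)
        then show False using a0 by simp
      qed
      have le: "card {x. F x + F (x + b) = a} \<le> 2" using apn b0 by (simp add: APN_def)
      have "x + b + b = x" by (simp add: add.assoc bit_add_self)
      then have "F (x + b) + F (x + b + b) = a" using xin by (simp only: add.commute)
      then have "{x, x + b} \<subseteq> {x. F x + F (x + b) = a}" using xin by auto
      moreover have "x \<noteq> x + b" using b0 by (rule neq_add)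
      ultimately have "card {x, x + b} \<le> card {x. F x + F (x + b) = a}"
        by (intro card_mono) auto
      then show "card {x. F x + F (x + b) = a} = 2" using le \<open>x \<noteq> x + b\<close> by simp
    qed
  qed
next
  assume H: "\<forall>a. a \<noteq> 0 \<longrightarrow> vF F a = 2 ^ (CARD('n) - 1)"
  show "APN F" unfolding APN_def
  proof (intro allI impI)
    fix a b :: "bit^'n" assume b0: "b \<noteq> 0"
    show "card {x. F x + F (x + b) = a} \<le> 2"
    proof (cases "{x. F x + F (x + b) = a} = {}")
      case True then show ?thesis by simp
    next
      case False
      then obtain x where xin: "F x + F (x + b) = a" by auto
      have a0: "a \<noteq> 0"
      proof
        assume "a = 0"
        then have "F (x + b) = F x" using xin addc[of "F x" "F (x+b)" 0] by simp
        then have "x + b = x" using assms(1) by (auto simp: bij_def inj_eq)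
        then show False using neq_add[OF b0, of x] by simp
      qed
      have "x + inv F (a + F x) = b" by (simp only: g_iff[OF assms(1)] xin)
      then have "b \<in> range (\<lambda>x. x + inv F (a + F x))" by (auto intro: range_eqI)
      then show ?thesis using H a0 key[OF assms(1) a0] by auto
    qed
  qed
qed

end
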